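(* Let $m\in\mathbb N$, $q_1,\dots,q_m\in[1,\infty)$ and $\frac1q=\sum_{i=1}^m\frac1{q_i}$. Let $\omega_1,\dots,\omega_m$ be weights on $\mathbb R^n$ with $\omega_1^{q_1},\dots,\omega_m^{q_m}\in A_\infty$ and $u_{\vec\omega}^q=\prod_{i=1}^m\omega_i^q\in A_\infty$, where $u_{\vec\omega}=\prod_{i=1}^m\omega_i$. Then for every ball $B\subseteq\mathbb R^n$, $$\prod_{i=1}^m\|\omega_i\|_{L^{q_i}(B)}\approx\|u_{\vec\omega}\|_{L^q(B)},$$ with implicit constants independent of $B$.
   Context: A weight is a nonnegative locally integrable function on $\mathbb R^n$, positive a.e. For a ball $B$ and $s>0$, $\|w\|_{L^s(B)}=(\int_Bw^s)^{1/s}$. $A_\infty=\bigcup_{1\le p<\infty}A_p$ (Muckenhoupt classes). $X\approx Y$ means $C^{-1}Y\le X\le CY$ for a constant $C$. *)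

theory Defs
  imports "HOL-Analysis.Analysis"
begin

definition is_weight :: "('a::euclidean_space \<Rightarrow> real) \<Rightarrow> bool" where
  "is_weight w \<longleftrightarrow>
     w \<in> borel_measurable lebesgue \<and> (\<forall>y. 0 \<le> w y) \<and>
     (\<forall>x r. set_integrable lebesgue (ball x r) w) \<and>
     (AE y in lebesgue. 0 < w y)"

definition avg :: "'a::euclidean_space set \<Rightarrow> ('a \<Rightarrow> real) \<Rightarrow> real" where
  "avg B w = (set_lebesgue_integral lebesgue B w) / measure lebesgue B"

definition Muckenhoupt :: "real \<Rightarrow> ('a::euclidean_space \<Rightarrow> real) \<Rightarrow> bool" where
  "Muckenhoupt p w \<longleftrightarrow> is_weight w \<and>
     (if p = 1 then
        (\<exists>C. \<forall>x r. 0 < r \<longrightarrow>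
           (AE y in lebesgue. y \<in> ball x r \<longrightarrow> avg (ball x r) w \<le> C * w y))
      else
        (\<exists>C. \<forall>x r. 0 < r \<longrightarrow>
           set_integrable lebesgue (ball x r) (\<lambda>y. w y powr (-1 / (p - 1))) \<and>
           avg (ball x r) w * (avg (ball x r) (\<lambda>y. w y powr (-1 / (p - 1)))) powr (p - 1) \<le> C))"

definition A_infty :: "('a::euclidean_space \<Rightarrow> real) \<Rightarrow> bool" where
  "A_infty w \<longleftrightarrow> (\<exists>p. 1 \<le> p \<and> Muckenhoupt p w)"

definition Lnorm :: "real \<Rightarrow> 'a::euclidean_space set \<Rightarrow> ('a \<Rightarrow> real) \<Rightarrow> real" where
  "Lnorm s B w = (set_lebesgue_integral lebesgue B (\<lambda>y. w y powr s)) powr (1 / s)"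

end

theory Submission imports Defs begin

lemma ball_facts:
  fixes x :: "'a::euclidean_space"
  assumes "0 < r"
  shows "ball x r \<in> sets lebesgue" "emeasure lebesgue (ball x r) < \<infinity>"
    "0 < measure lebesgue (ball x r)"
  using assms apply simp
  apply (metis fmeasurableD2 infinity_ennreal_def lmeasurable_ball top.not_eq_extremum)
  using assms by simp

lemma si_const:
  fixes x :: "'a::euclidean_space"
  shows "set_integrable lebesgue (ball x r) (\<lambda>_. c::real)"
proof (cases "0 < r")
  case True
  have "integrable lebesgue (\<lambda>y. c * indicator (ball x r) y)"
    using ball_facts[OF True, of x] by (intro integrable_mult_right integrable_real_indicator) auto
  then show ?thesis unfolding set_integrable_def by (simp add: mult.commute)
next
  case False
  then have "ball x r = {}" by simp
  then show ?thesis unfolding set_integrable_def by (simp add: \<open>ball x r = {}\<close>)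
qed

lemma sint_const:
  fixes x :: "'a::euclidean_space"
  shows "(LINT y:ball x r|lebesgue. (c::real)) = measure lebesgue (ball x r) * c"
proof (cases "0 < r")
  case True
  show ?thesis using set_integral_const[OF ball_facts(1)[OF True], of x c] ball_facts(2)[OF True, of x]
    by simp
next
  case False
  then have "ball x r = {}" by simp
  then show ?thesis by (simp add: set_lebesgue_integral_def)
qed

lemma si_sum:
  assumes "finite I" "\<And>i. i \<in> I \<Longrightarrow> set_integrable M B (f i)"
  shows "set_integrable M B (\<lambda>y. \<Sum>i\<in>I. (f i y::real))"
    "(LINT y:B|M. (\<Sum>i\<in>I. f i y)) = (\<Sum>i\<in>I. LINT y:B|M. f i y)"
proof -
  have eq: "(\<lambda>x. indicator B x *\<^sub>R (\<Sum>i\<in>I. f i x)) = (\<lambda>x. \<Sum>i\<in>I. indicator B x *\<^sub>R f i x)"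
    by (simp only: scaleR_sum_right)
  show "set_integrable M B (\<lambda>y. \<Sum>i\<in>I. (f i y::real))"
    using assms unfolding set_integrable_def eq by (intro Bochner_Integration.integrable_sum) auto
  show "(LINT y:B|M. (\<Sum>i\<in>I. f i y)) = (\<Sum>i\<in>I. LINT y:B|M. f i y)"
    using assms unfolding set_integrable_def set_lebesgue_integral_def eq by (intro Bochner_Integration.integral_sum) auto
qed

lemma sint_pos:
  fixes x :: "'a::euclidean_space" and f :: "'a \<Rightarrow> real"
  assumes r: "0 < r" and f: "set_integrable lebesgue (ball x r) f"
    and nn: "\<And>y. 0 \<le> f y" and pos: "AE y in lebesgue. 0 < f y"
  shows "0 < (LINT y:ball x r|lebesgue. f y)"
proof -
  let ?B = "ball x r"
  have i: "integrable lebesgue (\<lambda>y. indicator ?B y *\<^sub>R f y)"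
    using f unfolding set_integrable_def .
  have ge: "0 \<le> (LINT y:?B|lebesgue. f y)"
    unfolding set_lebesgue_integral_def using nn by (intro integral_nonneg_AE) (simp add: indicator_def)
  moreover have "(LINT y:?B|lebesgue. f y) \<noteq> 0"
  proof
    assume "(LINT y:?B|lebesgue. f y) = 0"
    then have "AE y in lebesgue. indicator ?B y *\<^sub>R f y = 0"
      unfolding set_lebesgue_integral_def
      using integral_nonneg_eq_0_iff_AE[OF i] nn by (simp add: indicator_def)
    with pos have "AE y in lebesgue. y \<notin> ?B"
      by eventually_elim (auto simp: indicator_def)
    then have "emeasure lebesgue ?B = 0"
      by (subst (asm) AE_iff_measurable[of ?B]) auto
    then show False using ball_facts(3)[OF r, of x]
      by (simp add: measure_def)
  qed
  ultimately show ?thesis by linarith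
qed


lemma jensen_exp:
  fixes x :: "'a::euclidean_space" and g h :: "'a \<Rightarrow> real"
  assumes r: "0 < r" and g: "set_integrable lebesgue (ball x r) g"
    and h: "set_integrable lebesgue (ball x r) h"
    and ae: "AE y in lebesgue. y \<in> ball x r \<longrightarrow> exp (g y) \<le> h y"
  shows "exp (avg (ball x r) g) \<le> avg (ball x r) h"
proof -
  define B where "B = ball x r"
  define \<mu> where "\<mu> = measure lebesgue B"
  have mu: "0 < \<mu>" using ball_facts(3)[OF r] unfolding \<mu>_def B_def by simp
  define c where "c = avg B g"
  have intg: "(LINT y:B|lebesgue. g y) = \<mu> * c"
    using mu unfolding c_def avg_def \<mu>_def by simp
  have pt: "exp c * (1 - c) + exp c * g y \<le> exp (g y)" for y
  proof -
    have "exp c * (1 - c) + exp c * g y = exp c * (1 + (g y - c))" by (simp add: algebra_simps)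
    also have "\<dots> \<le> exp c * exp (g y - c)" by (intro mult_left_mono) auto
    also have "\<dots> = exp (g y)" by (simp add: exp_diff)
    finally show ?thesis .
  qed
  have fi: "set_integrable lebesgue B (\<lambda>y. exp c * (1 - c) + exp c * g y)"
    unfolding B_def using si_const g by (intro set_integral_add(1)) auto
  have "(LINT y:B|lebesgue. exp c * (1 - c) + exp c * g y) \<le> (LINT y:B|lebesgue. h y)"
  proof (rule set_integral_mono_AE[OF fi])
    show "set_integrable lebesgue B h" using h B_def by simp
    show "AE y\<in>B in lebesgue. exp c * (1 - c) + exp c * g y \<le> h y"
      using ae unfolding B_def by eventually_elim (use pt order_trans in blast)
  qed
  also have "(LINT y:B|lebesgue. exp c * (1 - c) + exp c * g y) = \<mu> * exp c"
  proof -
    have "(LINT y:B|lebesgue. exp c * (1 - c) + exp c * g y)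
        = (LINT y:B|lebesgue. exp c * (1 - c)) + (LINT y:B|lebesgue. exp c * g y)"
      unfolding B_def using si_const g by (intro set_integral_add(2)) auto
    also have "\<dots> = \<mu> * (exp c * (1 - c)) + exp c * (\<mu> * c)"
      using intg unfolding \<mu>_def B_def by (simp add: sint_const)
    finally show ?thesis by (simp add: algebra_simps)
  qed
  finally have "\<mu> * exp c \<le> (LINT y:B|lebesgue. h y)" .
  then have "exp c \<le> (LINT y:B|lebesgue. h y) / \<mu>" using mu by (simp add: field_simps)
  then show ?thesis unfolding c_def avg_def \<mu>_def B_def by simp
qed

lemma A_infty_weight: "A_infty w \<Longrightarrow> is_weight w"
  by (auto simp: A_infty_def Muckenhoupt_def)

lemma avg_pos:
  fixes x :: "'a::euclidean_space"
  assumes "is_weight w" "0 < r"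
  shows "0 < avg (ball x r) w"
proof -
  have "0 < (LINT y:ball x r|lebesgue. w y)"
    using assms by (intro sint_pos) (auto simp: is_weight_def)
  then show ?thesis unfolding avg_def using ball_facts(3)[OF assms(2)] by simp
qed


lemma Ainf_log:
  fixes v :: "'a::euclidean_space \<Rightarrow> real"
  assumes A: "A_infty v"
  shows "\<exists>K. \<forall>x r. 0 < r \<longrightarrow> set_integrable lebesgue (ball x r) (\<lambda>y. ln (v y)) \<and>
           ln (avg (ball x r) v) \<le> K + avg (ball x r) (\<lambda>y. ln (v y))"
proof -
  obtain p where p: "1 \<le> p" and M: "Muckenhoupt p v" using A unfolding A_infty_def by blast
  have W: "is_weight v" using M unfolding Muckenhoupt_def by simp
  have meas[measurable]: "v \<in> borel_measurable lebesgue" and nn: "\<And>y. 0 \<le> v y"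
    and vint: "\<And>x r. set_integrable lebesgue (ball x r) v"
    and aepos: "AE y in lebesgue. 0 < v y"
    using W unfolding is_weight_def by auto
  have lnmeas: "set_borel_measurable lebesgue (ball x r) (\<lambda>y. ln (v y))" for x r
    unfolding set_borel_measurable_def by (intro borel_measurable_scaleR borel_measurable_indicator borel_measurable_ln meas) (simp add: ball_facts)
  show ?thesis
  proof (cases "p = 1")
    case True
    then obtain C where hC: "\<And>x r. 0 < r \<Longrightarrow>
           (AE y in lebesgue. y \<in> ball x r \<longrightarrow> avg (ball x r) v \<le> C * v y)"
      using M unfolding Muckenhoupt_def by auto
    define C' where "C' = max C 1"
    have C': "1 \<le> C'" unfolding C'_def by simp
    show ?thesis
    proof (intro exI allI impI conjI)
      fix x :: 'a and r :: real assume r: "0 < r"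
      define B where "B = ball x r"
      define a where "a = avg B v"
      define \<mu> where "\<mu> = measure lebesgue B"
      have mu: "0 < \<mu>" using ball_facts(3)[OF r] unfolding \<mu>_def B_def by simp
      have a: "0 < a" unfolding a_def B_def using avg_pos[OF W r] .
      have ae1: "AE y in lebesgue. y \<in> B \<longrightarrow> a \<le> C' * v y"
        using hC[OF r, of x] unfolding a_def B_def
      proof eventually_elim
        case (elim y)
        have "C * v y \<le> C' * v y" unfolding C'_def using nn[of y] by (intro mult_right_mono) auto
        then show ?case using elim by auto
      qed
      have ae2: "AE y in lebesgue. y \<in> B \<longrightarrow> 0 < v y \<and> ln a \<le> ln C' + ln (v y)"
        using ae1
      proof eventually_elim
        case (elim y)
        show ?case
        proof
          assume y: "y \<in> B"
          then have le: "a \<le> C' * v y" using elim by auto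
          then have "0 < C' * v y" using a by linarith
          then have vp: "0 < v y" using C' by (simp add: zero_less_mult_iff)
          have "ln a \<le> ln (C' * v y)" using le a by simp
          also have "\<dots> = ln C' + ln (v y)" using vp C' by (simp add: ln_mult)
          finally show "0 < v y \<and> ln a \<le> ln C' + ln (v y)" using vp by simp
        qed
      qed
      define L where "L = ln a - ln C'"
      have lint: "set_integrable lebesgue B (\<lambda>y. ln (v y))"
      proof (rule set_integrable_bound[where f = "\<lambda>y. v y + \<bar>L\<bar>"])
        show "set_integrable lebesgue B (\<lambda>y. v y + \<bar>L\<bar>)"
          unfolding B_def using vint si_const by (intro set_integral_add(1))
        show "set_borel_measurable lebesgue B (\<lambda>y. ln (v y))" unfolding B_def by (rule lnmeas)
        show "AE y in lebesgue. y \<in> B \<longrightarrow> norm (ln (v y)) \<le> norm (v y + \<bar>L\<bar>)"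
          using ae2
        proof eventually_elim
          case (elim y)
          show ?case
          proof
            assume "y \<in> B"
            then have vp: "0 < v y" and l: "L \<le> ln (v y)" using elim unfolding L_def by auto
            have "ln (v y) \<le> v y" using ln_bound[OF vp] .
            then show "norm (ln (v y)) \<le> norm (v y + \<bar>L\<bar>)" using l vp by auto
          qed
        qed
      qed
      then show "set_integrable lebesgue (ball x r) (\<lambda>y. ln (v y))" unfolding B_def .
      have "(LINT y:B|lebesgue. ln a) \<le> (LINT y:B|lebesgue. ln C' + ln (v y))"
      proof (rule set_integral_mono_AE)
        show "set_integrable lebesgue B (\<lambda>y. ln a)" unfolding B_def by (rule si_const)
        show "set_integrable lebesgue B (\<lambda>y. ln C' + ln (v y))"
          using lint si_const unfolding B_def by (intro set_integral_add(1))
        show "AE y\<in>B in lebesgue. ln a \<le> ln C' + ln (v y)" using ae2 by eventually_elim auto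
      qed
      also have "(LINT y:B|lebesgue. ln C' + ln (v y)) = \<mu> * ln C' + (LINT y:B|lebesgue. ln (v y))"
        using lint si_const unfolding B_def \<mu>_def by (subst set_integral_add(2)) (auto simp: sint_const)
      finally have "\<mu> * ln a \<le> \<mu> * ln C' + (LINT y:B|lebesgue. ln (v y))"
        unfolding B_def \<mu>_def by (simp add: sint_const)
      then have "ln a \<le> ln C' + (LINT y:B|lebesgue. ln (v y)) / \<mu>"
        using mu by (simp add: field_simps)
      then show "ln (avg (ball x r) v) \<le> ln C' + avg (ball x r) (\<lambda>y. ln (v y))"
        unfolding a_def avg_def \<mu>_def B_def .
    qed
  next
    case False
    then have p1: "1 < p" using p by simp
    define s where "s = -1 / (p - 1)"
    have s: "s < 0" unfolding s_def using p1 by simp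
    obtain C where hC: "\<And>x r. 0 < r \<Longrightarrow>
           set_integrable lebesgue (ball x r) (\<lambda>y. v y powr s) \<and>
           avg (ball x r) v * (avg (ball x r) (\<lambda>y. v y powr s)) powr (p - 1) \<le> C"
      using M False unfolding Muckenhoupt_def s_def by auto
    show ?thesis
    proof (intro exI allI impI conjI)
      fix x :: 'a and r :: real assume r: "0 < r"
      define B where "B = ball x r"
      define a where "a = avg B v"
      define w where "w = (\<lambda>y. v y powr s)"
      define b where "b = avg B w"
      have wint: "set_integrable lebesgue B w" and Cb: "a * b powr (p - 1) \<le> C"
        using hC[OF r, of x] unfolding B_def w_def a_def b_def by auto
      have a: "0 < a" unfolding a_def B_def using avg_pos[OF W r] .
      have ae2: "AE y in lebesgue. y \<in> B \<longrightarrow> 0 < v y" using aepos by auto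
      have lint: "set_integrable lebesgue B (\<lambda>y. ln (v y))"
      proof (rule set_integrable_bound[where f = "\<lambda>y. v y + (p - 1) * w y"])
        show "set_integrable lebesgue B (\<lambda>y. v y + (p - 1) * w y)"
          unfolding B_def using vint wint unfolding B_def by (intro set_integral_add(1)) auto
        show "set_borel_measurable lebesgue B (\<lambda>y. ln (v y))" unfolding B_def by (rule lnmeas)
        show "AE y in lebesgue. y \<in> B \<longrightarrow> norm (ln (v y)) \<le> norm (v y + (p - 1) * w y)"
          using aepos
        proof eventually_elim
          case (elim y)
          have vp: "0 < v y" using elim .
          have wp: "0 < w y" unfolding w_def using vp by simp
          have "ln (w y) = s * ln (v y)" unfolding w_def using vp by (simp add: ln_powr)
          moreover have "ln (w y) \<le> w y" using ln_bound[OF wp] .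
          ultimately have "- ln (v y) \<le> (p - 1) * w y"
          proof -
            assume e: "ln (w y) = s * ln (v y)" and l: "ln (w y) \<le> w y"
            have "- ln (v y) = (p - 1) * ln (w y)" unfolding e s_def using p1 by (simp add: field_simps)
            also have "\<dots> \<le> (p - 1) * w y" using l p1 by (intro mult_left_mono) auto
            finally show ?thesis .
          qed
          moreover have "ln (v y) \<le> v y" using ln_bound[OF vp] .
          moreover have "0 \<le> (p - 1) * w y" using wp p1 by simp
          ultimately show ?case using vp by (auto simp: abs_le_iff)
        qed
      qed
      then show "set_integrable lebesgue (ball x r) (\<lambda>y. ln (v y))" unfolding B_def .
      define L where "L = avg B (\<lambda>y. ln (v y))"
      have "exp (avg (ball x r) (\<lambda>y. s * ln (v y))) \<le> avg (ball x r) w"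
      proof (rule jensen_exp[OF r])
        show "set_integrable lebesgue (ball x r) (\<lambda>y. s * ln (v y))" using lint B_def by auto
        show "set_integrable lebesgue (ball x r) w" using wint B_def by simp
        show "AE y in lebesgue. y \<in> ball x r \<longrightarrow> exp (s * ln (v y)) \<le> w y"
          using aepos by eventually_elim (auto simp: w_def powr_def)
      qed
      moreover have "avg (ball x r) (\<lambda>y. s * ln (v y)) = s * L"
        unfolding avg_def L_def B_def by simp
      ultimately have eb: "exp (s * L) \<le> b" unfolding b_def B_def by simp
      then have b: "0 < b" using exp_gt_zero order_less_le_trans by blast
      have "s * L \<le> ln b" using eb b by (metis exp_le_cancel_iff exp_ln)
      then have lb: "- L \<le> (p - 1) * ln b" unfolding s_def using p1 by (simp add: field_simps)
      have pos: "0 < a * b powr (p - 1)" using a b by simp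
      then have Cp: "0 < C" using Cb by linarith
      have "ln (a * b powr (p - 1)) \<le> ln C" using Cb pos by simp
      then have "ln a + (p - 1) * ln b \<le> ln C" using a b by (simp add: ln_mult ln_powr)
      then show "ln (avg (ball x r) v) \<le> ln C + avg (ball x r) (\<lambda>y. ln (v y))"
        using lb unfolding a_def L_def B_def by simp
    qed
  qed
qed


theorem lemma2p3:
  fixes m :: nat and q :: "nat \<Rightarrow> real" and qq :: real
    and \<omega> :: "nat \<Rightarrow> 'a::euclidean_space \<Rightarrow> real"
  assumes m: "1 \<le> m"
    and q_ge: "\<forall>i<m. 1 \<le> q i"
    and qq_pos: "0 < qq"
    and qq_def: "1 / qq = (\<Sum>i<m. 1 / q i)"
    and weights: "\<forall>i<m. is_weight (\<omega> i)"
    and Ainf_i: "\<forall>i<m. A_infty (\<lambda>y. \<omega> i y powr q i)"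
    and Ainf_u: "A_infty (\<lambda>y. (\<Prod>i<m. \<omega> i y) powr qq)"
  shows "\<exists>C>0. \<forall>x r. 0 < r \<longrightarrow>
           (1 / C) * Lnorm qq (ball x r) (\<lambda>y. \<Prod>i<m. \<omega> i y)
             \<le> (\<Prod>i<m. Lnorm (q i) (ball x r) (\<omega> i)) \<and>
           (\<Prod>i<m. Lnorm (q i) (ball x r) (\<omega> i))
             \<le> C * Lnorm qq (ball x r) (\<lambda>y. \<Prod>i<m. \<omega> i y)"
proof -
  define I where "I = {..<m}"
  have I: "finite I" "I \<noteq> {}" unfolding I_def using m by (auto simp: lessThan_empty_iff)
  define \<theta> where "\<theta> i = qq / q i" for i
  define v where "v i = (\<lambda>y. \<omega> i y powr q i)" for i
  define U where "U = (\<lambda>y. (\<Prod>i<m. \<omega> i y) powr qq)"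
  have qpos: "\<And>i. i \<in> I \<Longrightarrow> 0 < q i" using q_ge unfolding I_def by force
  have thpos: "\<And>i. i \<in> I \<Longrightarrow> 0 < \<theta> i" using qpos qq_pos unfolding \<theta>_def by simp
  have thsum: "(\<Sum>i\<in>I. \<theta> i) = 1"
  proof -
    have "(\<Sum>i\<in>I. \<theta> i) = qq * (\<Sum>i\<in>I. 1 / q i)" unfolding \<theta>_def by (simp add: sum_distrib_left)
    also have "\<dots> = 1" using qq_def qq_pos unfolding I_def by (simp flip: qq_def)
    finally show ?thesis .
  qed
  have Wv: "\<And>i. i \<in> I \<Longrightarrow> is_weight (v i)"
    using Ainf_i A_infty_weight unfolding v_def I_def by blast
  have WU: "is_weight U" using Ainf_u A_infty_weight unfolding U_def by blast
  have "\<forall>i\<in>I. \<exists>K. \<forall>x r. 0 < r \<longrightarrow> set_integrable lebesgue (ball x r) (\<lambda>y. ln (v i y)) \<and>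
           ln (avg (ball x r) (v i)) \<le> K + avg (ball x r) (\<lambda>y. ln (v i y))"
    using Ainf_i Ainf_log unfolding I_def v_def by blast
  then obtain K where hK: "\<And>i x r. i \<in> I \<Longrightarrow> 0 < r \<Longrightarrow>
           set_integrable lebesgue (ball x r) (\<lambda>y. ln (v i y)) \<and>
           ln (avg (ball x r) (v i)) \<le> K i + avg (ball x r) (\<lambda>y. ln (v i y))"
    by metis
  have aeall: "AE y in lebesgue. \<forall>i\<in>I. 0 < \<omega> i y"
    using weights unfolding I_def is_weight_def by (intro AE_finite_allI) auto
  have key: "0 < U y \<and> (\<Sum>i\<in>I. \<theta> i * ln (v i y)) = ln (U y)" if pos: "\<forall>i\<in>I. 0 < \<omega> i y" for y
  proof -
    have pp: "0 < (\<Prod>i<m. \<omega> i y)" using pos unfolding I_def by (intro prod_pos) auto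
    have "(\<Sum>i\<in>I. \<theta> i * ln (v i y)) = (\<Sum>i\<in>I. qq * ln (\<omega> i y))"
    proof (rule sum.cong)
      fix i assume i: "i \<in> I"
      show "\<theta> i * ln (v i y) = qq * ln (\<omega> i y)"
        using pos i qpos[OF i] unfolding \<theta>_def v_def by (simp add: ln_powr)
    qed simp
    also have "\<dots> = qq * ln (\<Prod>i<m. \<omega> i y)"
      using pos unfolding I_def by (subst ln_prod) (force, force, simp add: sum_distrib_left)
    also have "\<dots> = ln (U y)" unfolding U_def using pp by (simp add: ln_powr)
    finally have "(\<Sum>i\<in>I. \<theta> i * ln (v i y)) = ln (U y)" .
    moreover have "0 < U y" unfolding U_def using pp by (simp only: powr_gt_zero)
    ultimately show ?thesis by simp
  qed
  define E where "E = (\<Sum>i\<in>I. \<theta> i * K i)"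
  define C where "C = max 1 (exp (E / qq))"
  have C1: "1 \<le> C" unfolding C_def by simp
  show ?thesis
  proof (intro exI[of _ C] conjI allI impI)
    show "0 < C" using C1 by simp
    fix x :: 'a and r :: real assume r: "0 < r"
    define B where "B = ball x r"
    define \<mu> where "\<mu> = measure lebesgue B"
    have mu: "0 < \<mu>" using ball_facts(3)[OF r] unfolding \<mu>_def B_def by simp
    define A where "A i = (LINT y:B|lebesgue. v i y)" for i
    have vint: "\<And>i. i \<in> I \<Longrightarrow> set_integrable lebesgue B (v i)"
      using Wv unfolding is_weight_def B_def by blast
    have Apos: "\<And>i. i \<in> I \<Longrightarrow> 0 < A i"
      unfolding A_def B_def using Wv r by (intro sint_pos) (auto simp: is_weight_def)
    define UI where "UI = (LINT y:B|lebesgue. U y)"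
    have Uint: "set_integrable lebesgue B U" using WU unfolding is_weight_def B_def by blast
    have UIpos: "0 < UI"
      unfolding UI_def B_def using WU r by (intro sint_pos) (auto simp: is_weight_def)
    define P where "P = (\<Prod>i<m. Lnorm (q i) (ball x r) (\<omega> i))"
    define Lu where "Lu = Lnorm qq (ball x r) (\<lambda>y. \<Prod>i<m. \<omega> i y)"
    have Lu: "Lu = UI powr (1 / qq)" unfolding Lu_def Lnorm_def UI_def U_def B_def ..
    have Pe: "P = (\<Prod>i\<in>I. A i powr (1 / q i))"
      unfolding P_def Lnorm_def A_def v_def B_def I_def ..
    have Ppos: "0 < P" unfolding Pe
    proof (intro prod_pos)
      fix i assume "i \<in> I" then show "0 < A i powr (1 / q i)" using Apos[of i] by simp
    qed
    have Lupos: "0 < Lu" unfolding Lu using UIpos by simp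
    have lnP: "ln P = (\<Sum>i\<in>I. (1 / q i) * ln (A i))"
    proof -
      have "ln P = (\<Sum>i\<in>I. ln (A i powr (1 / q i)))" unfolding Pe
      proof (rule ln_prod[OF I(1)])
        fix i assume "i \<in> I" then show "A i powr (1 / q i) \<noteq> 0" using Apos[of i] by simp
      qed
      also have "\<dots> = (\<Sum>i\<in>I. (1 / q i) * ln (A i))" by (intro sum.cong refl) (simp add: ln_powr)
      finally show ?thesis .
    qed
    have lnLu: "ln Lu = (1 / qq) * ln UI" unfolding Lu using UIpos by (simp add: ln_powr)
    have thq: "\<And>i. i \<in> I \<Longrightarrow> \<theta> i / qq = 1 / q i" unfolding \<theta>_def using qq_pos by simp
    have lnP2: "ln P = (\<Sum>i\<in>I. \<theta> i * ln (A i)) / qq"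
      unfolding lnP sum_divide_distrib using qq_pos by (intro sum.cong refl) (simp add: \<theta>_def)
    have lint: "\<And>i. i \<in> I \<Longrightarrow> set_integrable lebesgue B (\<lambda>y. ln (v i y))"
      using hK r unfolding B_def by blast
    define Lg where "Lg = (\<lambda>y. \<Sum>i\<in>I. \<theta> i * ln (v i y))"
    have Lgint: "set_integrable lebesgue B Lg"
      unfolding Lg_def using lint I by (intro si_sum(1)) auto
    have avgLg: "avg B Lg = (\<Sum>i\<in>I. \<theta> i * avg B (\<lambda>y. ln (v i y)))"
      unfolding avg_def Lg_def using lint I
      by (subst si_sum(2)) (auto simp: sum_divide_distrib)
    have "exp (avg (ball x r) Lg) \<le> avg (ball x r) U"
    proof (rule jensen_exp[OF r])
      show "set_integrable lebesgue (ball x r) Lg" using Lgint B_def by simp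
      show "set_integrable lebesgue (ball x r) U" using Uint B_def by simp
      show "AE y in lebesgue. y \<in> ball x r \<longrightarrow> exp (Lg y) \<le> U y"
        using aeall by eventually_elim (use key in \<open>auto simp: Lg_def\<close>)
    qed
    then have e: "exp (avg B Lg) \<le> UI / \<mu>" unfolding B_def UI_def \<mu>_def by (simp add: avg_def)
    have "ln (exp (avg B Lg)) \<le> ln (UI / \<mu>)" using e UIpos mu by (subst ln_le_cancel_iff) auto
    then have "avg B Lg \<le> ln (UI / \<mu>)" by simp
    then have up1: "avg B Lg \<le> ln UI - ln \<mu>" using UIpos mu by (simp add: ln_div)
    have "(\<Sum>i\<in>I. \<theta> i * ln (A i)) - ln \<mu> = (\<Sum>i\<in>I. \<theta> i * (ln (A i) - ln \<mu>))"
    proof -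
      have "(\<Sum>i\<in>I. \<theta> i * (ln (A i) - ln \<mu>)) = (\<Sum>i\<in>I. \<theta> i * ln (A i)) - (\<Sum>i\<in>I. \<theta> i) * ln \<mu>"
        by (simp add: right_diff_distrib sum_subtractf sum_distrib_right)
      then show ?thesis using thsum by simp
    qed
    also have "\<dots> \<le> (\<Sum>i\<in>I. \<theta> i * (K i + avg B (\<lambda>y. ln (v i y))))"
    proof (rule sum_mono)
      fix i assume i: "i \<in> I"
      have "ln (A i) - ln \<mu> = ln (avg B (v i))"
        unfolding avg_def A_def using Apos[OF i] mu by (simp add: ln_div A_def \<mu>_def)
      also have "\<dots> \<le> K i + avg B (\<lambda>y. ln (v i y))" using hK[OF i r] unfolding B_def by blast
      finally show "\<theta> i * (ln (A i) - ln \<mu>) \<le> \<theta> i * (K i + avg B (\<lambda>y. ln (v i y)))"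
        using thpos[OF i] by (intro mult_left_mono) auto
    qed
    also have "\<dots> = E + avg B Lg" unfolding E_def avgLg by (simp add: algebra_simps sum.distrib)
    finally have "(\<Sum>i\<in>I. \<theta> i * ln (A i)) \<le> E + ln UI" using up1 by simp
    then have "ln P \<le> E / qq + ln Lu" unfolding lnP2 lnLu using qq_pos
      by (metis add_divide_distrib divide_right_mono less_imp_le mult_1 times_divide_eq_left)
    also have "E / qq \<le> ln C" unfolding C_def
      by (metis exp_gt_zero exp_le_cancel_iff exp_ln max.cobounded2 order_less_le_trans)
    then have "E / qq + ln Lu \<le> ln (C * Lu)" using C1 Lupos by (simp add: ln_mult)
    finally have "P \<le> C * Lu" using Ppos Lupos C1 by simp
    then show "(\<Prod>i<m. Lnorm (q i) (ball x r) (\<omega> i))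
             \<le> C * Lnorm qq (ball x r) (\<lambda>y. \<Prod>i<m. \<omega> i y)" unfolding P_def Lu_def .
    define Pt where "Pt = exp (\<Sum>i\<in>I. \<theta> i * ln (A i))"
    have Ptpos: "0 < Pt" unfolding Pt_def by simp
    have amgm: "AE y in lebesgue. y \<in> B \<longrightarrow> U y / Pt \<le> (\<Sum>i\<in>I. \<theta> i / A i * v i y)"
      using aeall
    proof eventually_elim
      case (elim y)
      have k: "0 < U y" "(\<Sum>i\<in>I. \<theta> i * ln (v i y)) = ln (U y)" using key[OF elim] by auto
      have vp: "0 < v i y" if i: "i \<in> I" for i
      proof -
        have "0 < \<omega> i y" using elim i by blast
        then show ?thesis unfolding v_def by simp
      qed
      have "U y / Pt = exp (\<Sum>i\<in>I. \<theta> i *\<^sub>R (ln (v i y) - ln (A i)))"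
        unfolding Pt_def using k
        by (simp add: right_diff_distrib sum_subtractf exp_diff)
      also have "\<dots> \<le> (\<Sum>i\<in>I. \<theta> i * exp (ln (v i y) - ln (A i)))"
        using I thsum thpos by (intro convex_on_sum[OF _ _ exp_convex]) (auto simp: less_imp_le)
      also have "\<dots> = (\<Sum>i\<in>I. \<theta> i / A i * v i y)"
        using vp Apos by (intro sum.cong) (auto simp: exp_diff)
      finally show ?case by simp
    qed
    have "(LINT y:B|lebesgue. U y / Pt) \<le> (LINT y:B|lebesgue. (\<Sum>i\<in>I. \<theta> i / A i * v i y))"
    proof (rule set_integral_mono_AE)
      show "set_integrable lebesgue B (\<lambda>y. U y / Pt)" using Uint by auto
      show "set_integrable lebesgue B (\<lambda>y. \<Sum>i\<in>I. \<theta> i / A i * v i y)"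
        using vint I by (intro si_sum(1)) auto
      show "AE y\<in>B in lebesgue. U y / Pt \<le> (\<Sum>i\<in>I. \<theta> i / A i * v i y)" using amgm .
    qed
    also have "(LINT y:B|lebesgue. (\<Sum>i\<in>I. \<theta> i / A i * v i y)) = (\<Sum>i\<in>I. \<theta> i / A i * A i)"
      using vint I by (subst si_sum(2)) (auto simp: A_def)
    also have "\<dots> = (\<Sum>i\<in>I. \<theta> i)"
    proof (rule sum.cong[OF refl])
      fix i assume "i \<in> I"
      then have "A i \<noteq> 0" using Apos by force
      then show "\<theta> i / A i * A i = \<theta> i" by simp
    qed
    also have "\<dots> = 1" using thsum .
    finally have "UI / Pt \<le> 1" unfolding UI_def by simp
    then have "UI \<le> Pt" using Ptpos by simp
    then have "ln UI \<le> (\<Sum>i\<in>I. \<theta> i * ln (A i))" unfolding Pt_def using UIpos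
      by (metis ln_exp ln_le_cancel_iff exp_gt_zero)
    then have "ln Lu \<le> ln P" unfolding lnP2 lnLu using qq_pos by (simp add: divide_right_mono)
    then have "Lu \<le> P" using Lupos Ppos by simp
    moreover have "(1 / C) * Lu \<le> Lu" using C1 Lupos by (simp add: field_simps)
    ultimately show "(1 / C) * Lnorm qq (ball x r) (\<lambda>y. \<Prod>i<m. \<omega> i y)
             \<le> (\<Prod>i<m. Lnorm (q i) (ball x r) (\<omega> i))" unfolding P_def Lu_def by linarith
  qed
qed

end
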